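(* There exist supplementary difference sets in $\mathbb{Z}_{59}$ with parameters $(59;28,22;21)$; that is, there exist subsets $X,Y\subseteq\mathbb{Z}_{59}$ with $|X|=28$, $|Y|=22$ such that for every nonzero $c\in\mathbb{Z}_{59}$, the number of ordered pairs $(a,b)\in X\times X$ with $a-b\equiv c\pmod{59}$ plus the number of ordered pairs $(a,b)\in Y\times Y$ with $a-b\equiv c\pmod{59}$ equals $21$.
   Context: $\mathbb{Z}_v$ denotes the ring of integers modulo $v$. Subsets $X_1,\dots,X_t\subseteq\mathbb{Z}_v$ with $|X_i|=k_i$ are supplementary difference sets (SDS) with parameters $(v;k_1,\dots,k_t;\lambda)$ if for every nonzero $c\in\mathbb{Z}_v$ there are exactly $\lambda$ ordered triples $(a,b,i)$ with $a,b\in X_i$ and $a-b\equiv c\pmod v$. *)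

theory Defs
  imports Main
begin

text \<open>Z_v is represented by the residues {0..<v} (as integers); subtraction is taken mod v.
  Ordered triples (a,b,i) with a,b in X_i and a - b = c (mod v).\<close>

definition sds :: "int \<Rightarrow> int set list \<Rightarrow> nat list \<Rightarrow> nat \<Rightarrow> bool" where
  "sds v Xs ks lam \<longleftrightarrow>
     length Xs = length ks \<and>
     (\<forall>i < length Xs. Xs ! i \<subseteq> {0..<v} \<and> card (Xs ! i) = ks ! i) \<and>
     (\<forall>c \<in> {1..<v}.
        card {(a, b, i). i < length Xs \<and> a \<in> Xs ! i \<and> b \<in> Xs ! i \<and> (a - b) mod v = c} = lam)"

end

theory Submission
  imports Defs
begin


lemma pair_count:
  fixes X :: "int set" and v c :: int
  assumes X: "X \<subseteq> {0..<v}" and c: "c \<in> {0..<v}"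
  shows "{(a,b). a \<in> X \<and> b \<in> X \<and> (a - b) mod v = c} = (\<lambda>a. (a, (a - c) mod v)) ` {a \<in> X. (a - c) mod v \<in> X}"
proof (rule set_eqI, rule iffI)
  fix p assume "p \<in> {(a,b). a \<in> X \<and> b \<in> X \<and> (a - b) mod v = c}"
  then obtain a b where p: "p = (a,b)" "a \<in> X" "b \<in> X" "(a - b) mod v = c" by auto
  have b: "0 \<le> b" "b < v" using X p by auto
  have "(a - c) mod v = (a - (a - b) mod v) mod v" using p by simp
  also have "\<dots> = (a - (a - b)) mod v" by (simp add: mod_diff_right_eq)
  also have "\<dots> = b" using b by simp
  finally show "p \<in> (\<lambda>a. (a, (a - c) mod v)) ` {a \<in> X. (a - c) mod v \<in> X}" using p by auto
next
  fix p assume "p \<in> (\<lambda>a. (a, (a - c) mod v)) ` {a \<in> X. (a - c) mod v \<in> X}"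
  then obtain a where p: "p = (a, (a - c) mod v)" "a \<in> X" "(a - c) mod v \<in> X" by auto
  have "(a - (a - c) mod v) mod v = (a - (a - c)) mod v" by (simp add: mod_diff_right_eq)
  also have "\<dots> = c" using c by simp
  finally show "p \<in> {(a,b). a \<in> X \<and> b \<in> X \<and> (a - b) mod v = c}" using p by auto
qed

lemma card_pairs:
  fixes X :: "int set" and v c :: int
  assumes X: "X \<subseteq> {0..<v}" and c: "c \<in> {0..<v}"
  shows "card {(a,b). a \<in> X \<and> b \<in> X \<and> (a - b) mod v = c} = card {a \<in> X. (a - c) mod v \<in> X}"
  unfolding pair_count[OF assms] by (rule card_image) (auto simp: inj_on_def)

lemma triples2:
  fixes X Y :: "int set"
  shows "{(a, b, i). i < length [X,Y] \<and> a \<in> [X,Y] ! i \<and> b \<in> [X,Y] ! i \<and> (a - b) mod v = c}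
   = (\<lambda>(a,b). (a,b,0::nat)) ` {(a,b). a \<in> X \<and> b \<in> X \<and> (a - b) mod v = c}
   \<union> (\<lambda>(a,b). (a,b,1::nat)) ` {(a,b). a \<in> Y \<and> b \<in> Y \<and> (a - b) mod v = c}" (is "?L = ?R")
proof (rule set_eqI)
  fix p :: "int \<times> int \<times> nat"
  obtain a b i where p: "p = (a,b,i)" by (cases p) auto
  show "p \<in> ?L \<longleftrightarrow> p \<in> ?R"
    unfolding p by (cases i) (auto simp: image_iff less_2_cases_iff)
qed


lemma card_triples:
  fixes X Y :: "int set"
  assumes X: "X \<subseteq> {0..<v}" and Y: "Y \<subseteq> {0..<v}" and c: "c \<in> {0..<v}"
  shows "card {(a, b, i). i < length [X,Y] \<and> a \<in> [X,Y] ! i \<and> b \<in> [X,Y] ! i \<and> (a - b) mod v = c}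
     = card {a \<in> X. (a - c) mod v \<in> X} + card {a \<in> Y. (a - c) mod v \<in> Y}"
proof -
  have fX: "finite X" using X finite_subset by blast
  have fY: "finite Y" using Y finite_subset by blast
  let ?P = "\<lambda>Z. {(a,b). a \<in> Z \<and> b \<in> Z \<and> (a - b) mod v = c}"
  have fin: "finite (?P Z)" if "finite Z" for Z :: "int set"
    by (rule finite_subset[of _ "Z \<times> Z"]) (use that in auto)
  have "card (?P X) = card {a \<in> X. (a - c) mod v \<in> X}" by (rule card_pairs[OF X c])
  moreover have "card (?P Y) = card {a \<in> Y. (a - c) mod v \<in> Y}" by (rule card_pairs[OF Y c])
  moreover have "card ((\<lambda>(a,b). (a,b,0::nat)) ` ?P X \<union> (\<lambda>(a,b). (a,b,1::nat)) ` ?P Y)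
      = card (?P X) + card (?P Y)"
    apply (subst card_Un_disjoint)
    using fin[OF fX] fin[OF fY] by (auto simp: card_image inj_on_def)
  ultimately show ?thesis unfolding triples2 by simp
qed

lemma sds_from_lists:
  fixes xs ys :: "int list"
  assumes "distinct xs" "distinct ys" "length xs = k1" "length ys = k2"
    "\<forall>x\<in>set xs. 0 \<le> x \<and> x < v" "\<forall>x\<in>set ys. 0 \<le> x \<and> x < v"
    "\<forall>c\<in>set [1..v-1]. length (filter (\<lambda>a. (a - c) mod v \<in> set xs) xs) + length (filter (\<lambda>a. (a - c) mod v \<in> set ys) ys) = lam"
  shows "sds v [set xs, set ys] [k1, k2] lam"
proof -
  have X: "set xs \<subseteq> {0..<v}" and Y: "set ys \<subseteq> {0..<v}" using assms(5,6) by auto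
  have cardX: "card (set xs) = k1" using assms(1,3) by (simp add: distinct_card)
  have cardY: "card (set ys) = k2" using assms(2,4) by (simp add: distinct_card)
  have flt: "card {a \<in> set zs. P a} = length (filter P zs)" if "distinct zs" for zs :: "int list" and P
  proof -
    have "{a \<in> set zs. P a} = {x. P x} \<inter> set zs" by auto
    thus ?thesis using that by (simp add: distinct_length_filter)
  qed
  have A: "\<forall>i < length [set xs, set ys]. [set xs, set ys] ! i \<subseteq> {0..<v} \<and> card ([set xs, set ys] ! i) = [k1, k2] ! i"
  proof (intro allI impI)
    fix i assume "i < length [set xs, set ys]"
    then have "i = 0 \<or> i = 1" by auto
    then show "[set xs, set ys] ! i \<subseteq> {0..<v} \<and> card ([set xs, set ys] ! i) = [k1, k2] ! i"
      using X Y cardX cardY by auto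
  qed
  have B: "\<forall>c \<in> {1..<v}. card {(a, b, i). i < length [set xs, set ys] \<and> a \<in> [set xs, set ys] ! i \<and> b \<in> [set xs, set ys] ! i \<and> (a - b) mod v = c} = lam"
  proof
    fix c assume c: "c \<in> {1..<v}"
    then have c0: "c \<in> {0..<v}" by auto
    have "c \<in> set [1..v-1]" using c by simp
    then show "card {(a, b, i). i < length [set xs, set ys] \<and> a \<in> [set xs, set ys] ! i \<and> b \<in> [set xs, set ys] ! i \<and> (a - b) mod v = c} = lam"
      unfolding card_triples[OF X Y c0] flt[OF assms(1)] flt[OF assms(2)] using assms(7) by blast
  qed
  show ?thesis unfolding sds_def using A B by simp
qed


definition Xl :: "int list" where "Xl = [0,2,9,10,15,19,20,22,23,24,26,27,29,30,31,36,38,40,41,42,44,46,47,49,50,52,55,56]"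
definition Yl :: "int list" where "Yl = [0,7,8,10,12,15,16,18,23,24,28,30,31,32,42,43,49,52,53,54,56,58]"

lemma check_lists:
  "\<forall>c\<in>set [1..59-1]. length (filter (\<lambda>a. (a - c) mod 59 \<in> set Xl) Xl) + length (filter (\<lambda>a. (a - c) mod 59 \<in> set Yl) Yl) = (21::nat)"
  unfolding Xl_def Yl_def by code_simp

theorem mainTheorem7:
  shows "\<exists>X Y :: int set. sds 59 [X, Y] [28, 22] 21"
proof -
  have "sds 59 [set Xl, set Yl] [28, 22] 21"
    by (rule sds_from_lists[OF _ _ _ _ _ _ check_lists]) (simp_all add: Xl_def Yl_def)
  thus ?thesis by blast
qed

end
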